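(* Let $R$ be a reflexive relation on $U$. The set of completely join-irreducible elements of $\mathrm{DM(RS)}$ is $\{(\{x\}^{\vartriangle\blacktriangledown},\{x\}^{\vartriangle\blacktriangle})\mid \{x\}^{\vartriangle}\text{ is completely join-irreducible in }\wp(U)^{\vartriangle}\}\ \cup\ \{(\{x\}^{\blacktriangledown},\{x\}^{\blacktriangle})\mid \{x\}^{\blacktriangle}\text{ is completely join-irreducible in }\wp(U)^{\blacktriangle}\text{ and }x\notin\mathcal S\}.$
   Context: Let $U$ be a set and $R\subseteq U\times U$ a binary relation. For $x\in U$, $R(x)=\{y\in U\mid (x,y)\in R\}$ and $\breve R(x)=\{y\in U\mid (y,x)\in R\}$. For $X\subseteq U$: $X^{\blacktriangledown}=\{x\in U\mid R(x)\subseteq X\}$, $X^{\blacktriangle}=\{x\in U\mid R(x)\cap X\neq\emptyset\}$, $X^{\triangledown}=\{x\in U\mid \breve R(x)\subseteq X\}$, $X^{\vartriangle}=\{x\in U\mid \breve R(x)\cap X\neq\emptyset\}$; thus $\{x\}^{\vartriangle}=R(x)$ and $\{x\}^{\blacktriangle}=\breve R(x)$, and composites such as $X^{\vartriangle\blacktriangledown}$ mean $(X^{\vartriangle})^{\blacktriangledown}$. $\wp(U)^{\blacktriangledown}=\{X^{\blacktriangledown}\mid X\subseteq U\}$ and similarly $\wp(U)^{\blacktriangle},\wp(U)^{\vartriangle}$, complete lattices under $\subseteq$ (joins in $\wp(U)^{\blacktriangle},\wp(U)^{\vartriangle}$ are unions). $\mathcal S=\{x\in U\mid |R(x)|=1\}$.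 $\mathrm{RS}=\{(X^{\blacktriangledown},X^{\blacktriangle})\mid X\subseteq U\}$ ordered coordinatewise; $\mathrm{DM(RS)}$ is its Dedekind–MacNeille completion, identified with $\{(A,B)\in\wp(U)^{\blacktriangledown}\times\wp(U)^{\blacktriangle}\mid A^{\vartriangle\blacktriangle}\subseteq B,\ A\cap\mathcal S=B\cap\mathcal S\}$ ordered coordinatewise, with meets $\bigwedge_i(X_i,Y_i)=(\bigcap_iX_i,(\bigcap_iY_i)^{\triangledown\blacktriangle})$ and joins $\bigvee_i(X_i,Y_i)=((\bigcup_iX_i)^{\vartriangle\blacktriangledown},\bigcup_iY_i)$. An element $j$ of a complete lattice $L$ is completely join-irreducible if $j=\bigvee S$ implies $j\in S$ for every $S\subseteq L$. *)

theory Defs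
  imports Main
begin

text \<open>The universe U is the type 'a (U = UNIV). R is a binary relation on it.\<close>

definition Rimg :: "('a \<times> 'a) set \<Rightarrow> 'a \<Rightarrow> 'a set" where
  "Rimg R x = {y. (x, y) \<in> R}"

definition Rconv :: "('a \<times> 'a) set \<Rightarrow> 'a \<Rightarrow> 'a set" where
  "Rconv R x = {y. (y, x) \<in> R}"

definition bdown :: "('a \<times> 'a) set \<Rightarrow> 'a set \<Rightarrow> 'a set" where
  "bdown R X = {x. Rimg R x \<subseteq> X}"

definition bup :: "('a \<times> 'a) set \<Rightarrow> 'a set \<Rightarrow> 'a set" where
  "bup R X = {x. Rimg R x \<inter> X \<noteq> {}}"

definition wdown :: "('a \<times> 'a) set \<Rightarrow> 'a set \<Rightarrow> 'a set" where
  "wdown R X = {x. Rconv R x \<subseteq> X}"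

definition wup :: "('a \<times> 'a) set \<Rightarrow> 'a set \<Rightarrow> 'a set" where
  "wup R X = {x. Rconv R x \<inter> X \<noteq> {}}"

definition singR :: "('a \<times> 'a) set \<Rightarrow> 'a set" where
  "singR R = {x. \<exists>y. Rimg R x = {y}}"

(* DM(RS), in its identified form *)
definition DM :: "('a \<times> 'a) set \<Rightarrow> ('a set \<times> 'a set) set" where
  "DM R = {(A, B). A \<in> range (bdown R) \<and> B \<in> range (bup R)
            \<and> bup R (wup R A) \<subseteq> B \<and> A \<inter> singR R = B \<inter> singR R}"

definition pair_le :: "('a set \<times> 'a set) \<Rightarrow> ('a set \<times> 'a set) \<Rightarrow> bool" where
  "pair_le p q \<longleftrightarrow> fst p \<subseteq> fst q \<and> snd p \<subseteq> snd q"

definition is_join :: "'b set \<Rightarrow> ('b \<Rightarrow> 'b \<Rightarrow> bool) \<Rightarrow> 'b set \<Rightarrow> 'b \<Rightarrow> bool" where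
  "is_join L le S j \<longleftrightarrow> j \<in> L \<and> (\<forall>s\<in>S. le s j)
       \<and> (\<forall>u\<in>L. (\<forall>s\<in>S. le s u) \<longrightarrow> le j u)"

definition cji :: "'b set \<Rightarrow> ('b \<Rightarrow> 'b \<Rightarrow> bool) \<Rightarrow> 'b \<Rightarrow> bool" where
  "cji L le j \<longleftrightarrow> j \<in> L \<and> (\<forall>S. S \<subseteq> L \<longrightarrow> is_join L le S j \<longrightarrow> j \<in> S)"

end

theory Submission
  imports Defs
begin

lemma wup_Un: "wup R (\<Union>X) = \<Union>(wup R ` X)" by (auto simp: wup_def)
lemma bup_Un: "bup R (\<Union>X) = \<Union>(bup R ` X)" by (auto simp: bup_def)
lemma wup_mono: "X \<subseteq> Y \<Longrightarrow> wup R X \<subseteq> wup R Y" by (auto simp: wup_def)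
lemma bup_mono: "X \<subseteq> Y \<Longrightarrow> bup R X \<subseteq> bup R Y" by (auto simp: bup_def)
lemma bdown_mono: "X \<subseteq> Y \<Longrightarrow> bdown R X \<subseteq> bdown R Y" by (auto simp: bdown_def)
lemma galois: "wup R X \<subseteq> Y \<longleftrightarrow> X \<subseteq> bdown R Y"
  by (auto simp: wup_def bdown_def Rimg_def Rconv_def)
lemma incl1: "X \<subseteq> bdown R (wup R X)" by (auto simp: wup_def bdown_def Rimg_def Rconv_def)
lemma incl2: "wup R (bdown R Y) \<subseteq> Y" by (auto simp: wup_def bdown_def Rimg_def Rconv_def)
lemma bdwb: "bdown R (wup R (bdown R Y)) = bdown R Y"
  by (meson bdown_mono incl1 incl2 subset_antisym)
lemma wbw: "wup R (bdown R (wup R X)) = wup R X"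
  by (meson wup_mono incl1 incl2 subset_antisym)
lemma bd_closed: "A \<in> range (bdown R) \<Longrightarrow> bdown R (wup R A) = A"
  by (auto simp: bdwb)
lemma wu_closed: "W \<in> range (wup R) \<Longrightarrow> wup R (bdown R W) = W"
  by (auto simp: wbw)
lemma sing: "y \<in> singR R \<Longrightarrow> y \<in> bdown R W \<longleftrightarrow> y \<in> bup R W"
  by (auto simp: singR_def bdown_def bup_def)

lemma Un_range_wup: "F \<subseteq> range (wup R) \<Longrightarrow> \<Union>F \<in> range (wup R)"
proof -
  assume "F \<subseteq> range (wup R)"
  then have e: "\<And>W. W \<in> F \<Longrightarrow> wup R (bdown R W) = W" using wu_closed by auto
  have "wup R (\<Union>(bdown R ` F)) = \<Union>F" by (auto simp: wup_Un e)
  then have "\<Union>F = wup R (\<Union>(bdown R ` F))" by simp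
  then show ?thesis by blast
qed

lemma Un_range_bup: "F \<subseteq> range (bup R) \<Longrightarrow> \<Union>F \<in> range (bup R)"
proof -
  assume a: "F \<subseteq> range (bup R)"
  have "\<Union>F = bup R (\<Union>{X. bup R X \<in> F})"
    unfolding bup_Un using a by blast
  then show ?thesis by blast
qed

lemma is_join_pow: "\<Union>F \<in> L \<Longrightarrow> is_join L (\<subseteq>) F j \<longleftrightarrow> j = \<Union>F"
  unfolding is_join_def by blast

lemma DM_sub: "q \<in> DM R \<Longrightarrow> bup R (wup R (fst q)) \<subseteq> snd q"
  by (cases q) (simp add: DM_def)
lemma DM_fst: "q \<in> DM R \<Longrightarrow> fst q \<in> range (bdown R)"
  by (cases q) (simp add: DM_def)
lemma DM_snd: "q \<in> DM R \<Longrightarrow> snd q \<in> range (bup R)"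
  by (cases q) (simp add: DM_def)
lemma DM_S: "q \<in> DM R \<Longrightarrow> fst q \<inter> singR R = snd q \<inter> singR R"
  by (cases q) (simp add: DM_def)

definition jDM :: "('a \<times> 'a) set \<Rightarrow> ('a set \<times> 'a set) set \<Rightarrow> 'a set \<times> 'a set" where
  "jDM R G = (bdown R (wup R (\<Union>(fst ` G))), \<Union>(snd ` G))"

lemma jDM_in: assumes "G \<subseteq> DM R" shows "jDM R G \<in> DM R"
proof -
  let ?U = "\<Union>(fst ` G)"
  have 1: "\<Union>(snd ` G) \<in> range (bup R)"
    by (rule Un_range_bup) (use assms in \<open>auto intro!: DM_snd\<close>)
  have "bup R (wup R (bdown R (wup R ?U))) = bup R (wup R ?U)" by (simp add: wbw)
  also have "\<dots> = (\<Union>q\<in>G. bup R (wup R (fst q)))" by (simp add: wup_Un bup_Un)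
  also have "\<dots> \<subseteq> \<Union>(snd ` G)"
  proof (rule UN_least)
    fix q assume q: "q \<in> G"
    then have "q \<in> DM R" using assms by blast
    then have "bup R (wup R (fst q)) \<subseteq> snd q" by (rule DM_sub)
    then show "bup R (wup R (fst q)) \<subseteq> \<Union>(snd ` G)" using q by blast
  qed
  finally have 2: "bup R (wup R (bdown R (wup R ?U))) \<subseteq> \<Union>(snd ` G)" .
  have 3: "bdown R (wup R ?U) \<inter> singR R = \<Union>(snd ` G) \<inter> singR R"
  proof (intro equalityI subsetI)
    fix y assume y: "y \<in> bdown R (wup R ?U) \<inter> singR R"
    then obtain z where z: "Rimg R y = {z}" by (auto simp: singR_def)
    with y have "z \<in> wup R ?U" by (auto simp: bdown_def)
    then obtain q where q: "q \<in> G" "z \<in> wup R (fst q)" by (auto simp: wup_Un)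
    then have "y \<in> bup R (wup R (fst q))" using z by (auto simp: bup_def)
    moreover have "bup R (wup R (fst q)) \<subseteq> snd q" using q assms DM_sub[of q R] by auto
    ultimately show "y \<in> \<Union>(snd ` G) \<inter> singR R" using q y by blast
  next
    fix y assume y: "y \<in> \<Union>(snd ` G) \<inter> singR R"
    then obtain A B where AB: "(A,B) \<in> G" "y \<in> B" by auto
    then have "A \<inter> singR R = B \<inter> singR R" using assms DM_S[of "(A,B)" R] by auto
    then have "y \<in> A" using y AB by blast
    then have "y \<in> bdown R (wup R ?U)" using AB incl1[of ?U R] by force
    then show "y \<in> bdown R (wup R ?U) \<inter> singR R" using y by blast
  qed
  show ?thesis using 1 2 3 unfolding jDM_def DM_def by auto
qed

lemma jDM_join: assumes "G \<subseteq> DM R" shows "is_join (DM R) pair_le G (jDM R G)"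
proof -
  let ?U = "\<Union>(fst ` G)"
  have ub: "\<forall>s\<in>G. pair_le s (jDM R G)"
  proof
    fix s assume "s \<in> G"
    then have sU: "fst s \<subseteq> ?U" by blast
    have "fst s \<subseteq> bdown R (wup R (fst s))" by (rule incl1)
    also have "\<dots> \<subseteq> bdown R (wup R ?U)" by (rule bdown_mono[OF wup_mono[OF sU]])
    finally have "fst s \<subseteq> bdown R (wup R ?U)" .
    then show "pair_le s (jDM R G)" using \<open>s \<in> G\<close> unfolding pair_le_def jDM_def by auto
  qed
  have least: "\<forall>u\<in>DM R. (\<forall>s\<in>G. pair_le s u) \<longrightarrow> pair_le (jDM R G) u"
  proof (intro ballI impI)
    fix u assume u: "u \<in> DM R" and b: "\<forall>s\<in>G. pair_le s u"
    then have U: "?U \<subseteq> fst u" and V: "\<Union>(snd ` G) \<subseteq> snd u" by (auto simp: pair_le_def)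
    have "bdown R (wup R ?U) \<subseteq> bdown R (wup R (fst u))" by (rule bdown_mono[OF wup_mono[OF U]])
    also have "bdown R (wup R (fst u)) = fst u" using u by (intro bd_closed DM_fst)
    finally show "pair_le (jDM R G) u" unfolding pair_le_def jDM_def using V by simp
  qed
  show ?thesis unfolding is_join_def using jDM_in[OF assms] ub least by blast
qed

lemma jDM_iff: assumes "G \<subseteq> DM R" shows "is_join (DM R) pair_le G j \<longleftrightarrow> j = jDM R G"
proof
  assume j: "is_join (DM R) pair_le G j"
  have k: "is_join (DM R) pair_le G (jDM R G)" by (rule jDM_join[OF assms])
  from j k have "pair_le j (jDM R G)" "pair_le (jDM R G) j" unfolding is_join_def by blast+
  then show "j = jDM R G" unfolding pair_le_def by (auto simp: prod_eq_iff)
next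
  assume "j = jDM R G" then show "is_join (DM R) pair_le G j" using jDM_join[OF assms] by simp
qed


lemma DM_elem: "(bdown R W, bup R W) \<in> DM R"
proof -
  have "bup R (wup R (bdown R W)) \<subseteq> bup R W" by (rule bup_mono[OF incl2])
  moreover have "bdown R W \<inter> singR R = bup R W \<inter> singR R"
    by (auto simp: singR_def bdown_def bup_def)
  ultimately show ?thesis unfolding DM_def by auto
qed

lemma cji_i:
  assumes W: "W \<in> range (wup R)"
  shows "cji (DM R) pair_le (bdown R W, bup R W) \<longleftrightarrow> cji (range (wup R)) (\<subseteq>) W"
proof
  assume c: "cji (DM R) pair_le (bdown R W, bup R W)"
  show "cji (range (wup R)) (\<subseteq>) W" unfolding cji_def
  proof (intro conjI allI impI)
    show "W \<in> range (wup R)" by (rule W)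
    fix F assume F: "F \<subseteq> range (wup R)" and j: "is_join (range (wup R)) (\<subseteq>) F W"
    have WF: "W = \<Union>F" using j is_join_pow[OF Un_range_wup[OF F]] by blast
    let ?G = "(\<lambda>V. (bdown R V, bup R V)) ` F"
    have G: "?G \<subseteq> DM R" using DM_elem by blast
    have "wup R (\<Union>(fst ` ?G)) = \<Union>((\<lambda>V. wup R (bdown R V)) ` F)"
      by (simp add: wup_Un image_image)
    also have "\<dots> = \<Union>F" using F wu_closed by (metis (no_types, lifting) SUP_cong image_ident subsetD)
    finally have e1: "wup R (\<Union>(fst ` ?G)) = W" using WF by simp
    have e2: "\<Union>(snd ` ?G) = bup R W" using WF by (simp add: bup_Un image_image)
    have "jDM R ?G = (bdown R W, bup R W)" unfolding jDM_def using e1 e2 by simp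
    then have "(bdown R W, bup R W) \<in> ?G" using c G jDM_iff[OF G] unfolding cji_def by metis
    then obtain V where V: "V \<in> F" "bdown R W = bdown R V" by auto
    then have "wup R (bdown R W) = wup R (bdown R V)" by simp
    then have "W = V" using W F V(1) wu_closed by (metis subsetD)
    then show "W \<in> F" using V by simp
  qed
next
  assume c: "cji (range (wup R)) (\<subseteq>) W"
  show "cji (DM R) pair_le (bdown R W, bup R W)" unfolding cji_def
  proof (intro conjI allI impI)
    show "(bdown R W, bup R W) \<in> DM R" by (rule DM_elem)
    fix G assume G: "G \<subseteq> DM R" and j: "is_join (DM R) pair_le G (bdown R W, bup R W)"
    have p: "(bdown R W, bup R W) = jDM R G" using j jDM_iff[OF G] by blast
    let ?U = "\<Union>(fst ` G)"
    let ?F = "(\<lambda>q. wup R (fst q)) ` G"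
    have F: "?F \<subseteq> range (wup R)" by blast
    have "\<Union>?F = wup R ?U" by (simp add: wup_Un image_image)
    also have "\<dots> = wup R (bdown R (wup R ?U))" by (simp add: wbw)
    also have "\<dots> = wup R (bdown R W)" using p unfolding jDM_def by simp
    also have "\<dots> = W" using wu_closed[OF W] .
    finally have "is_join (range (wup R)) (\<subseteq>) ?F W"
      using is_join_pow[OF Un_range_wup[OF F]] by simp
    then have "W \<in> ?F" using c F unfolding cji_def by blast
    then obtain A B where AB: "(A,B) \<in> G" "W = wup R A" by auto
    have ADM: "(A,B) \<in> DM R" using AB G by blast
    then have "A = bdown R (wup R A)" using bd_closed unfolding DM_def by auto
    then have A: "A = bdown R W" using AB by simp
    have "B \<subseteq> \<Union>(snd ` G)" using AB by force
    then have "B \<subseteq> bup R W" using p unfolding jDM_def by simp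
    moreover have "bup R W \<subseteq> B" using DM_sub[OF ADM] AB(2) by simp
    ultimately have "B = bup R W" by blast
    then show "(bdown R W, bup R W) \<in> G" using A AB(1) by simp
  qed
qed

lemma bdown_empty: assumes r: "\<And>x. (x,x) \<in> R" shows "bdown R {} = {}"
  using r by (auto simp: bdown_def Rimg_def)

lemma cji_ii:
  assumes r: "\<And>x. (x,x) \<in> R" and W: "W \<in> range (bup R)" and S: "W \<inter> singR R = {}"
  shows "cji (DM R) pair_le ({}, W) \<longleftrightarrow> cji (range (bup R)) (\<subseteq>) W"
proof -
  have inDM: "({}, V) \<in> DM R" if "V \<in> range (bup R)" "V \<subseteq> W" for V
  proof -
    have "{} \<in> range (bdown R)" using bdown_empty[OF r] by (metis rangeI)
    moreover have "bup R (wup R {}) = {}" by (auto simp: bup_def wup_def)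
    ultimately show ?thesis using that S unfolding DM_def by auto
  qed
  show ?thesis
  proof
    assume c: "cji (DM R) pair_le ({}, W)"
    show "cji (range (bup R)) (\<subseteq>) W" unfolding cji_def
    proof (intro conjI allI impI)
      show "W \<in> range (bup R)" by (rule W)
      fix F assume F: "F \<subseteq> range (bup R)" and j: "is_join (range (bup R)) (\<subseteq>) F W"
      have WF: "W = \<Union>F" using j is_join_pow[OF Un_range_bup[OF F]] by blast
      let ?G = "(\<lambda>V. ({}::'a set, V)) ` F"
      have G: "?G \<subseteq> DM R" using inDM F WF by blast
      have "\<Union>(fst ` ?G) = {}" by auto
      then have "jDM R ?G = ({}, W)" unfolding jDM_def using WF bdown_empty[OF r]
        by (simp add: image_image wup_def)
      then have "({}, W) \<in> ?G" using c G jDM_iff[OF G] unfolding cji_def by metis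
      then show "W \<in> F" by auto
    qed
  next
    assume c: "cji (range (bup R)) (\<subseteq>) W"
    show "cji (DM R) pair_le ({}, W)" unfolding cji_def
    proof (intro conjI allI impI)
      show "({}, W) \<in> DM R" using inDM W by blast
      fix G assume G: "G \<subseteq> DM R" and j: "is_join (DM R) pair_le G ({}, W)"
      have p: "({}, W) = jDM R G" using j jDM_iff[OF G] by blast
      let ?U = "\<Union>(fst ` G)"
      let ?F = "snd ` G"
      have F: "?F \<subseteq> range (bup R)" using G by (auto intro!: DM_snd)
      have "\<Union>?F = W" using p unfolding jDM_def by simp
      then have "is_join (range (bup R)) (\<subseteq>) ?F W"
        using is_join_pow[OF Un_range_bup[OF F]] by simp
      then have "W \<in> ?F" using c F unfolding cji_def by blast
      then obtain A where AB: "(A,W) \<in> G" by auto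
      have AU: "A \<subseteq> ?U" using AB by force
      have "A \<subseteq> bdown R (wup R A)" by (rule incl1)
      also have "\<dots> \<subseteq> bdown R (wup R ?U)" by (rule bdown_mono[OF wup_mono[OF AU]])
      finally have "A \<subseteq> bdown R (wup R ?U)" .
      then have "A = {}" using p unfolding jDM_def by simp
      then show "({}, W) \<in> G" using AB by simp
    qed
  qed
qed

lemma nonS: assumes r: "\<And>x. (x,x) \<in> R" and x: "x \<notin> singR R"
  shows "bdown R {x} = {}" "bup R {x} \<inter> singR R = {}"
proof -
  show "bdown R {x} = {}"
  proof (rule ccontr)
    assume "bdown R {x} \<noteq> {}"
    then obtain y where "Rimg R y \<subseteq> {x}" by (auto simp: bdown_def)
    moreover have "y \<in> Rimg R y" using r by (auto simp: Rimg_def)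
    ultimately have "Rimg R x = {x}" by blast
    then show False using x by (auto simp: singR_def)
  qed
  show "bup R {x} \<inter> singR R = {}"
  proof (rule ccontr)
    assume "bup R {x} \<inter> singR R \<noteq> {}"
    then obtain y z where yz: "x \<in> Rimg R y" "Rimg R y = {z}" by (auto simp: bup_def singR_def)
    moreover have "y \<in> Rimg R y" using r by (auto simp: Rimg_def)
    ultimately have "x = z" "y = z" by auto
    then have "Rimg R x = {x}" using yz(2) by simp
    then show False using x by (auto simp: singR_def)
  qed
qed

theorem mainTheorem2:
  fixes R :: "('a \<times> 'a) set"
  assumes "refl R"
  shows "{p. cji (DM R) pair_le p} =
     {(bdown R (wup R {x}), bup R (wup R {x})) | x.
         cji (range (wup R)) (\<subseteq>) (wup R {x})}
   \<union> {(bdown R {x}, bup R {x}) | x.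
         cji (range (bup R)) (\<subseteq>) (bup R {x}) \<and> x \<notin> singR R}"
proof -
  have r: "\<And>x. (x,x) \<in> R" using assms by (simp add: refl_on_def)
  show ?thesis
  proof (intro equalityI subsetI)
    fix p assume "p \<in> {(bdown R (wup R {x}), bup R (wup R {x})) | x.
         cji (range (wup R)) (\<subseteq>) (wup R {x})}
       \<union> {(bdown R {x}, bup R {x}) | x.
         cji (range (bup R)) (\<subseteq>) (bup R {x}) \<and> x \<notin> singR R}"
    then show "p \<in> {p. cji (DM R) pair_le p}"
    proof
      assume "p \<in> {(bdown R (wup R {x}), bup R (wup R {x})) | x.
         cji (range (wup R)) (\<subseteq>) (wup R {x})}"
      then obtain x where "p = (bdown R (wup R {x}), bup R (wup R {x}))"
        "cji (range (wup R)) (\<subseteq>) (wup R {x})" by blast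
      then show ?thesis using cji_i[of "wup R {x}" R] by auto
    next
      assume "p \<in> {(bdown R {x}, bup R {x}) | x.
         cji (range (bup R)) (\<subseteq>) (bup R {x}) \<and> x \<notin> singR R}"
      then obtain x where x: "p = (bdown R {x}, bup R {x})"
        "cji (range (bup R)) (\<subseteq>) (bup R {x})" "x \<notin> singR R" by blast
      then show ?thesis using cji_ii[OF r, of "bup R {x}"] nonS[OF r x(3)] by auto
    qed
  next
    fix p assume "p \<in> {p. cji (DM R) pair_le p}"
    then have c: "cji (DM R) pair_le p" by simp
    then have pDM: "p \<in> DM R" unfolding cji_def by blast
    obtain A B where AB: "p = (A,B)" by fastforce
    obtain Y where Y: "B = bup R Y" using pDM AB unfolding DM_def by auto
    have Ar: "A \<in> range (bdown R)" and sub: "bup R (wup R A) \<subseteq> B"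
      and AS: "A \<inter> singR R = B \<inter> singR R" using pDM AB unfolding DM_def by auto
    let ?J1 = "(\<lambda>a. (bdown R (wup R {a}), bup R (wup R {a}))) ` A"
    let ?J2 = "(\<lambda>y. ({}::'a set, bup R {y})) ` (Y - singR R)"
    let ?G = "?J1 \<union> ?J2"
    have G: "?G \<subseteq> DM R"
    proof
      fix q assume "q \<in> ?G"
      then show "q \<in> DM R"
      proof
        assume "q \<in> ?J1" then show ?thesis using DM_elem by blast
      next
        assume "q \<in> ?J2"
        then obtain y where y: "q = ({}, bup R {y})" "y \<notin> singR R" by blast
        then show ?thesis using DM_elem[of R "{y}"] nonS[OF r y(2)] by simp
      qed
    qed
    let ?U = "\<Union>(fst ` ?G)"
    have U1: "A \<subseteq> ?U"
    proof
      fix a assume "a \<in> A"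
      then have "a \<in> bdown R (wup R {a})" using incl1[of "{a}" R] by blast
      then show "a \<in> ?U" using \<open>a \<in> A\<close> by force
    qed
    have U2: "?U \<subseteq> bdown R (wup R A)"
    proof
      fix z assume "z \<in> ?U"
      then obtain q where q: "q \<in> ?G" "z \<in> fst q" by blast
      then obtain a where "a \<in> A" "q = (bdown R (wup R {a}), bup R (wup R {a}))" by auto
      then show "z \<in> bdown R (wup R A)" using q bdown_mono[OF wup_mono[of "{a}" A]] by auto
    qed
    have "bdown R (wup R ?U) = A"
    proof
      have "bdown R (wup R ?U) \<subseteq> bdown R (wup R (bdown R (wup R A)))"
        by (rule bdown_mono[OF wup_mono[OF U2]])
      also have "\<dots> = A" by (simp add: bdwb bd_closed[OF Ar])
      finally show "bdown R (wup R ?U) \<subseteq> A" .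
      have "A = bdown R (wup R A)" using bd_closed[OF Ar] by simp
      also have "\<dots> \<subseteq> bdown R (wup R ?U)" by (rule bdown_mono[OF wup_mono[OF U1]])
      finally show "A \<subseteq> bdown R (wup R ?U)" .
    qed
    moreover have "\<Union>(snd ` ?G) = B"
    proof
      show "\<Union>(snd ` ?G) \<subseteq> B"
      proof
        fix z assume "z \<in> \<Union>(snd ` ?G)"
        then obtain q where q: "q \<in> ?G" "z \<in> snd q" by blast
        from q(1) show "z \<in> B"
        proof
          assume "q \<in> ?J1"
          then obtain a where "a \<in> A" "q = (bdown R (wup R {a}), bup R (wup R {a}))" by auto
          then show ?thesis using q sub bup_mono[OF wup_mono[of "{a}" A]] by auto
        next
          assume "q \<in> ?J2"
          then obtain y where "y \<in> Y" "q = ({}, bup R {y})" by auto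
          then show ?thesis using q Y bup_mono[of "{y}" Y] by auto
        qed
      qed
      show "B \<subseteq> \<Union>(snd ` ?G)"
      proof
        fix z assume "z \<in> B"
        then obtain y where y: "y \<in> Y" "y \<in> Rimg R z" using Y by (auto simp: bup_def)
        then have zy: "z \<in> bup R {y}" by (auto simp: bup_def)
        show "z \<in> \<Union>(snd ` ?G)"
        proof (cases "y \<in> singR R")
          case False
          then have "({}, bup R {y}) \<in> ?G" using y by blast
          then show ?thesis using zy by force
        next
          case True
          have "y \<in> B" using y Y r by (auto simp: bup_def Rimg_def)
          then have "y \<in> A" using AS True by blast
          have yy: "{y} \<subseteq> wup R {y}" using r by (auto simp: wup_def Rconv_def)
          have "z \<in> bup R (wup R {y})" using zy bup_mono[OF yy] by blast
          moreover have "(bdown R (wup R {y}), bup R (wup R {y})) \<in> ?G" using \<open>y \<in> A\<close> by blast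
          ultimately show ?thesis by force
        qed
      qed
    qed
    ultimately have "jDM R ?G = p" unfolding jDM_def using AB by simp
    then have ij: "is_join (DM R) pair_le ?G p" using jDM_iff[OF G] by simp
    have c': "\<forall>S. S \<subseteq> DM R \<longrightarrow> is_join (DM R) pair_le S p \<longrightarrow> p \<in> S"
      using c by (simp add: cji_def)
    have "p \<in> ?G" using c'[rule_format, OF G ij] .
    then show "p \<in> {(bdown R (wup R {x}), bup R (wup R {x})) | x.
         cji (range (wup R)) (\<subseteq>) (wup R {x})}
       \<union> {(bdown R {x}, bup R {x}) | x.
         cji (range (bup R)) (\<subseteq>) (bup R {x}) \<and> x \<notin> singR R}"
    proof
      assume "p \<in> ?J1"
      then obtain a where a: "p = (bdown R (wup R {a}), bup R (wup R {a}))" by auto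
      then have "cji (range (wup R)) (\<subseteq>) (wup R {a})" using c cji_i[of "wup R {a}" R] by auto
      then show ?thesis using a by blast
    next
      assume "p \<in> ?J2"
      then obtain y where y: "p = ({}, bup R {y})" "y \<notin> singR R" by auto
      then have "cji (range (bup R)) (\<subseteq>) (bup R {y})"
        using c cji_ii[OF r, of "bup R {y}"] nonS[OF r y(2)] by auto
      moreover have "p = (bdown R {y}, bup R {y})" using y nonS[OF r y(2)] by simp
      ultimately show ?thesis using y by blast
    qed
  qed
qed

end
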